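(* The hypothesis-variant problem is GI-hard. This problem takes as input two finite sets of constant-free rules (hypotheses) $h_1,h_2$ and asks whether $h_1$ and $h_2$ are hypothesis-variants of each other.
   Context: A rule $r$ has the form $h\leftarrow p_1,\dots,p_n$, where $h,p_1,\dots,p_n$ are literals. Here $head(r)=h$ and $body(r)=\{p_1,\dots,p_n\}$. We write $vars(l)$ for the variables of a literal $l$. We set $head\_vars(r)=vars(head(r))$ and $body\_vars(r)=\bigcup_{l\in body(r)}vars(l)$. The body-only variables of $r$ are $body\_vars(r)\setminus head\_vars(r)$. A rule $r'$ is a body-variant of a rule $r$ if there is a bijective renaming $\sigma$ from the body-only variables of $r$ to the body-only variables of $r'$, extended by the identity on all other variables, such that $r\sigma=r'$. A hypothesis is a finite set of rules. A hypothesis $h'$ is a variant of a hypothesis $h$ if there is a bijection $f$ from the rules of $h'$ to the rules of $h$ such that every $r\in h'$ is a body-variant of $f(r)$. Two hypotheses are hypothesis-variants of each other if each is a variant of the other. A problem is GI-hard if graph isomorphism for finite undirected graphs is polynomial-time reducible to it. *)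

theory Defs
  imports Main
begin

text \<open>Variables and predicate symbols are natural numbers. A literal is a predicate
symbol applied to a list of variables; there are no constants, so every rule built
from these literals is constant-free.\<close>

datatype lit = Lit (pred: nat) (args: "nat list")

datatype rule = Rule (head: lit) (body: "lit set")

definition vars :: "lit \<Rightarrow> nat set" where
  "vars l = set (args l)"

definition head_vars :: "rule \<Rightarrow> nat set" where
  "head_vars r = vars (head r)"

definition body_vars :: "rule \<Rightarrow> nat set" where
  "body_vars r = (\<Union>l\<in>body r. vars l)"

definition body_only_vars :: "rule \<Rightarrow> nat set" where
  "body_only_vars r = body_vars r - head_vars r"

definition lit_rename :: "(nat \<Rightarrow> nat) \<Rightarrow> lit \<Rightarrow> lit" where
  "lit_rename \<sigma> l = Lit (pred l) (map \<sigma> (args l))"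

definition rule_rename :: "(nat \<Rightarrow> nat) \<Rightarrow> rule \<Rightarrow> rule" where
  "rule_rename \<sigma> r = Rule (lit_rename \<sigma> (head r)) (lit_rename \<sigma> ` body r)"

definition is_body_variant :: "rule \<Rightarrow> rule \<Rightarrow> bool" where
  "is_body_variant r' r \<longleftrightarrow>
     (\<exists>\<sigma>. bij_betw \<sigma> (body_only_vars r) (body_only_vars r') \<and>
          rule_rename (\<lambda>x. if x \<in> body_only_vars r then \<sigma> x else x) r = r')"

definition is_hyp_variant :: "rule set \<Rightarrow> rule set \<Rightarrow> bool" where
  "is_hyp_variant h' h \<longleftrightarrow>
     (\<exists>f. bij_betw f h' h \<and> (\<forall>r\<in>h'. is_body_variant r (f r)))"

definition hyp_variants :: "rule set \<Rightarrow> rule set \<Rightarrow> bool" where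
  "hyp_variants h1 h2 \<longleftrightarrow> is_hyp_variant h1 h2 \<and> is_hyp_variant h2 h1"

text \<open>A graph code (n, es) denotes the graph with vertex set {0..<n} and edge set
{{u,v} | (u,v) in es}; valid codes have endpoints < n and no loops.\<close>

type_synonym graph_code = "nat \<times> (nat \<times> nat) list"

definition valid_graph :: "graph_code \<Rightarrow> bool" where
  "valid_graph g \<longleftrightarrow> (\<forall>(u,v)\<in>set (snd g). u < fst g \<and> v < fst g \<and> u \<noteq> v)"

definition edges :: "graph_code \<Rightarrow> nat set set" where
  "edges g = {{u, v} | u v. (u, v) \<in> set (snd g)}"

definition graph_iso :: "graph_code \<Rightarrow> graph_code \<Rightarrow> bool" where
  "graph_iso g1 g2 \<longleftrightarrow>
     (\<exists>f. bij_betw f {..<fst g1} {..<fst g2} \<and>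
          (\<forall>u<fst g1. \<forall>v<fst g1. {u, v} \<in> edges g1 \<longleftrightarrow> {f u, f v} \<in> edges g2))"

datatype obj = N nat | L "obj list"

text \<open>Words over the alphabet {1,2,3,4} (0 is the blank): naturals in unary.\<close>
fun enc :: "obj \<Rightarrow> nat list" where
  "enc (N n) = replicate n 1 @ [2]"
| "enc (L xs) = 3 # concat (map enc xs) @ [4]"

definition graph_obj :: "graph_code \<Rightarrow> obj" where
  "graph_obj g = L [N (fst g), L (map (\<lambda>(u,v). L [N u, N v]) (snd g))]"

definition lit_obj :: "lit \<Rightarrow> obj" where
  "lit_obj l = L [N (pred l), L (map N (args l))]"

type_synonym rule_code = "lit \<times> lit list"

definition to_rule :: "rule_code \<Rightarrow> rule" where
  "to_rule rc = Rule (fst rc) (set (snd rc))"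

definition rule_obj :: "rule_code \<Rightarrow> obj" where
  "rule_obj rc = L [lit_obj (fst rc), L (map lit_obj (snd rc))]"

definition hyp_obj :: "rule_code list \<Rightarrow> obj" where
  "hyp_obj rs = L (map rule_obj rs)"

definition to_hyp :: "rule_code list \<Rightarrow> rule set" where
  "to_hyp rs = to_rule ` set rs"

datatype dir = Lft | Rgt | Stay

text \<open>States are 0..<nstates (0 = start, 1 = halt), symbols 0..<nsyms (0 = blank).\<close>
record tm =
  nstates :: nat
  nsyms :: nat
  delta :: "nat \<Rightarrow> nat \<Rightarrow> nat \<times> nat \<times> dir"

definition wf_tm :: "tm \<Rightarrow> bool" where
  "wf_tm M \<longleftrightarrow> 2 \<le> nstates M \<and> 5 \<le> nsyms M \<and>
     (\<forall>q<nstates M. \<forall>a<nsyms M.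
        fst (delta M q a) < nstates M \<and> fst (snd (delta M q a)) < nsyms M)"

text \<open>Configuration: state, tape left of the head (reversed), tape from the head on.\<close>
type_synonym config = "nat \<times> nat list \<times> nat list"

definition read_sym :: "nat list \<Rightarrow> nat" where
  "read_sym xs = (case xs of [] \<Rightarrow> 0 | a # _ \<Rightarrow> a)"

definition step :: "tm \<Rightarrow> config \<Rightarrow> config" where
  "step M c = (case c of (q, ls, rs) \<Rightarrow>
     if q = 1 then (q, ls, rs) else
     (case delta M q (read_sym rs) of (q', b, d) \<Rightarrow>
       (case d of
          Stay \<Rightarrow> (q', ls, b # tl rs)
        | Rgt \<Rightarrow> (q', b # ls, tl rs)
        | Lft \<Rightarrow> (q', tl ls, read_sym ls # b # tl rs))))"

definition run :: "tm \<Rightarrow> nat \<Rightarrow> config \<Rightarrow> config" where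
  "run M t c = (step M ^^ t) c"

definition computes_within :: "tm \<Rightarrow> nat \<Rightarrow> nat list \<Rightarrow> nat list \<Rightarrow> bool" where
  "computes_within M T w out \<longleftrightarrow>
     (\<exists>t\<le>T. \<exists>ls rs. run M t (0, [], w) = (1, ls, rs) \<and> set ls \<subseteq> {0} \<and>
        (\<exists>k. rs = out @ replicate k 0))"

end

theory Submission
  imports Defs
begin


definition NC :: nat where "NC = 36"
definition go :: "nat \<Rightarrow> nat \<Rightarrow> nat" where "go a c = 2*NC + NC*a + c"
definition ret :: "nat \<Rightarrow> nat" where "ret c = NC + c"

definition ctrl :: "nat \<Rightarrow> nat \<Rightarrow> nat \<times> nat \<times> dir" where
"ctrl c x = (
  if c = 0 then (if x = 3 then (go 3 2, 0, Rgt) else (c, x, Stay))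
  else if c = 2 then (if x = 3 then (go 3 20, 0, Rgt) else if x = 4 then (go 4 1, 0, Rgt) else (c, x, Stay))
  else if c = 3 then (if x = 1 then (go 1 3, 0, Rgt) else if x = 2 then (go 2 22, 0, Rgt) else (c, x, Stay))
  else if c = 4 then (if x = 3 then (go 3 5, 0, Rgt) else (c, x, Stay))
  else if c = 5 then (if x = 3 then (go 3 25, 0, Rgt) else if x = 4 then (go 4 27, 0, Rgt) else (c, x, Stay))
  else if c = 6 then (if x = 5 then (6, 5, Rgt) else if x = 1 then (go 1 6, 5, Rgt) else if x = 2 then (go 2 7, 2, Stay) else (c, x, Stay))
  else if c = 7 then (if x = 5 then (7, 5, Rgt) else if x = 2 then (8, 2, Rgt) else (c, x, Stay))
  else if c = 8 then (if x = 5 then (8, 5, Rgt) else if x = 1 then (go 1 7, 5, Rgt) else if x = 2 then (go 2 29, 2, Stay) else (c, x, Stay))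
  else if c = 9 then (if x = 5 then (9, 5, Rgt) else if x = 2 then (10, 2, Rgt) else (c, x, Stay))
  else if c = 10 then (if x = 6 then (10, 6, Rgt) else if x = 5 then (go 1 9, 6, Rgt) else if x = 2 then (go 2 11, 2, Stay) else (c, x, Stay))
  else if c = 11 then (if x = 7 then (11, 7, Rgt) else if x = 5 then (go 1 11, 7, Rgt) else if x = 2 then (go 2 34, 2, Stay) else (c, x, Stay))
  else if c = 12 then (if x = 4 then (5, 0, Rgt) else (12, 0, Rgt))
  else if c = 28 then (if x = 4 then (go 4 2, 0, Rgt) else (c, x, Stay))
  else if c = 20 then (go 3 21, x, Stay)
  else if c = 21 then (go 3 3, x, Stay)
  else if c = 22 then (go 3 23, x, Stay)
  else if c = 23 then (go 4 24, x, Stay)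
  else if c = 24 then (go 4 4, x, Stay)
  else if c = 25 then (go 2 26, x, Stay)
  else if c = 26 then (go 3 6, x, Stay)
  else if c = 27 then (go 4 28, x, Stay)
  else if c = 29 then (go 4 30, x, Stay)
  else if c = 30 then (go 4 31, x, Stay)
  else if c = 31 then (go 3 32, x, Stay)
  else if c = 32 then (go 2 33, x, Stay)
  else if c = 33 then (go 3 9, x, Stay)
  else if c = 34 then (go 4 35, x, Stay)
  else if c = 35 then (go 4 12, x, Stay)
  else (c, x, Stay))"

definition dl :: "nat \<Rightarrow> nat \<Rightarrow> nat \<times> nat \<times> dir" where
"dl q x = (if q < NC then ctrl q x
   else if q < 2*NC then (if x = 0 then (q - NC, 0, Rgt) else (q, x, Lft))
   else if q < 7*NC then (if x = 0 then (NC + (q - 2*NC) mod NC, (q - 2*NC) div NC, Stay) else (q, x, Rgt))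
   else (q, 0, Stay))"

definition TM :: tm where "TM = \<lparr>nstates = 7*NC, nsyms = 8, delta = dl\<rparr>"

lemma wf_TM: "wf_tm TM"
  unfolding wf_tm_def TM_def
  by (auto simp: dl_def ctrl_def go_def NC_def)

lemma delta_TM: "delta TM = dl" by (simp add: TM_def)

lemma dl_go: "1 \<le> a \<Longrightarrow> a \<le> 4 \<Longrightarrow> c < NC \<Longrightarrow>
  dl (go a c) x = (if x = 0 then (ret c, a, Stay) else (go a c, x, Rgt))"
  by (auto simp: dl_def go_def ret_def NC_def)

lemma dl_ret: "c < NC \<Longrightarrow> dl (ret c) x = (if x = 0 then (c, 0, Rgt) else (ret c, x, Lft))"
  by (auto simp: dl_def ret_def NC_def)

lemma dl_ctrl: "c < NC \<Longrightarrow> dl c x = ctrl c x" by (simp add: dl_def)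

lemma go_ne1: "go a c \<noteq> 1" "go a c \<noteq> Suc 0" by (simp_all add: go_def NC_def)
lemma ret_ne1: "ret c \<noteq> 1" "ret c \<noteq> Suc 0" by (simp_all add: ret_def NC_def)

definition R :: "nat \<Rightarrow> nat list \<Rightarrow> nat list \<Rightarrow> nat \<Rightarrow> nat list \<Rightarrow> nat list \<Rightarrow> nat \<Rightarrow> bool" where
"R q ls xs q' ls' xs' B \<longleftrightarrow> (\<forall>k. \<exists>t\<le>B. \<exists>k'. run TM t (q, ls, xs @ replicate k 0) = (q', ls', xs' @ replicate k' 0))"

lemma R_refl: "R q ls xs q ls xs 0"
  unfolding R_def run_def by auto

lemma R_trans: "R q ls xs q1 ls1 xs1 B1 \<Longrightarrow> R q1 ls1 xs1 q2 ls2 xs2 B2 \<Longrightarrow> R q ls xs q2 ls2 xs2 (B1 + B2)"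
  unfolding R_def
proof (intro allI)
  fix k
  assume A: "\<forall>k. \<exists>t\<le>B1. \<exists>k'. run TM t (q, ls, xs @ replicate k 0) = (q1, ls1, xs1 @ replicate k' 0)"
    and B: "\<forall>k. \<exists>t\<le>B2. \<exists>k'. run TM t (q1, ls1, xs1 @ replicate k 0) = (q2, ls2, xs2 @ replicate k' 0)"
  obtain t1 k1 where t1: "t1 \<le> B1" "run TM t1 (q, ls, xs @ replicate k 0) = (q1, ls1, xs1 @ replicate k1 0)"
    using A by blast
  obtain t2 k2 where t2: "t2 \<le> B2" "run TM t2 (q1, ls1, xs1 @ replicate k1 0) = (q2, ls2, xs2 @ replicate k2 0)"
    using B by blast
  have "run TM (t2 + t1) (q, ls, xs @ replicate k 0) = (q2, ls2, xs2 @ replicate k2 0)"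
    using t1 t2 unfolding run_def by (simp add: funpow_add)
  then show "\<exists>t\<le>B1 + B2. \<exists>k'. run TM t (q, ls, xs @ replicate k 0) = (q2, ls2, xs2 @ replicate k' 0)"
    using t1 t2 by (intro exI[of _ "t2+t1"]) auto
qed

lemma R_mono: "R q ls xs q' ls' xs' B \<Longrightarrow> B \<le> B' \<Longrightarrow> R q ls xs q' ls' xs' B'"
  unfolding R_def by (meson order_trans)

lemma run1: "run M (Suc 0) c = step M c" by (simp add: run_def)

lemma R_rgt: "q \<noteq> 1 \<Longrightarrow> dl q a = (q', b, Rgt) \<Longrightarrow> R q ls (a # xs) q' (b # ls) xs 1"
  unfolding R_def
  by (intro allI exI[of _ 1]) (auto simp: run1 step_def read_sym_def delta_TM intro!: exI)

lemma R_stay: "q \<noteq> 1 \<Longrightarrow> dl q a = (q', b, Stay) \<Longrightarrow> R q ls (a # xs) q' ls (b # xs) 1"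
  unfolding R_def
  by (intro allI exI[of _ 1]) (auto simp: run1 step_def read_sym_def delta_TM intro!: exI)

lemma R_lft: "q \<noteq> 1 \<Longrightarrow> dl q a = (q', b, Lft) \<Longrightarrow> R q (x # ls) (a # xs) q' ls (x # b # xs) 1"
  unfolding R_def
  by (intro allI exI[of _ 1]) (auto simp: run1 step_def read_sym_def delta_TM intro!: exI)

lemma R_stay_end: "q \<noteq> 1 \<Longrightarrow> dl q 0 = (q', b, Stay) \<Longrightarrow> R q ls [] q' ls [b] 1"
  unfolding R_def
proof (intro allI)
  fix k assume "q \<noteq> 1" "dl q 0 = (q', b, Stay)"
  then have "run TM 1 (q, ls, [] @ replicate k 0) = (q', ls, [b] @ replicate (k - 1) 0)"
    by (cases k) (auto simp: run1 step_def read_sym_def delta_TM)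
  then show "\<exists>t\<le>1. \<exists>k'. run TM t (q, ls, [] @ replicate k 0) = (q', ls, [b] @ replicate k' 0)"
    by blast
qed

lemma R_skip: "q \<noteq> 1 \<Longrightarrow> (\<forall>y\<in>set ys. dl q y = (q, y, Rgt)) \<Longrightarrow> R q ls (ys @ r) q (rev ys @ ls) r (length ys)"
proof (induction ys arbitrary: ls)
  case Nil then show ?case by (simp add: R_refl)
next
  case (Cons y ys)
  have "R q ls (y # ys @ r) q (y # ls) (ys @ r) 1" using Cons.prems by (intro R_rgt) auto
  moreover have "R q (y # ls) (ys @ r) q (rev ys @ y # ls) r (length ys)" using Cons by auto
  ultimately show ?case using R_trans by fastforce
qed

lemma R_eat: "q \<noteq> 1 \<Longrightarrow> (\<forall>y\<in>set ys. dl q y = (q, 0, Rgt)) \<Longrightarrow> R q ls (ys @ r) q (replicate (length ys) 0 @ ls) r (length ys)"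
proof (induction ys arbitrary: ls)
  case Nil then show ?case by (simp add: R_refl)
next
  case (Cons y ys)
  have "R q ls (y # ys @ r) q (0 # ls) (ys @ r) 1" using Cons.prems by (intro R_rgt) auto
  moreover have "R q (0 # ls) (ys @ r) q (replicate (length ys) 0 @ 0 # ls) r (length ys)" using Cons by auto
  ultimately show ?case using R_trans by (fastforce simp: replicate_app_Cons_same)
qed

lemma R_retL: "c < NC \<Longrightarrow> 0 \<notin> set T \<Longrightarrow> y \<noteq> 0 \<Longrightarrow>
   R (ret c) (rev T @ ls) (y # r) (ret c) ls (T @ y # r) (length T)"
proof (induction T arbitrary: y r rule: rev_induct)
  case Nil then show ?case by (simp add: R_refl)
next
  case (snoc t T)
  have "R (ret c) (t # rev T @ ls) (y # r) (ret c) (rev T @ ls) (t # y # r) 1"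
    using snoc.prems by (intro R_lft) (auto simp: ret_ne1 dl_ret)
  moreover have "R (ret c) (rev T @ ls) (t # y # r) (ret c) ls (T @ t # y # r) (length T)"
    using snoc by auto
  ultimately show ?case using R_trans by fastforce
qed

lemma R_goret: "c < NC \<Longrightarrow> 1 \<le> a \<Longrightarrow> a \<le> 4 \<Longrightarrow> 0 \<notin> set pre \<Longrightarrow> 0 \<notin> set post \<Longrightarrow>
  R (go a c) (rev pre @ 0 # z) post c (0 # z) (pre @ post @ [a]) (length pre + 2 * length post + 3)"
proof -
  assume H: "c < NC" "1 \<le> a" "a \<le> 4" "0 \<notin> set pre" "0 \<notin> set post"
  have 1: "R (go a c) (rev pre @ 0 # z) (post @ []) (go a c) (rev post @ rev pre @ 0 # z) [] (length post)"
    using H by (intro R_skip) (auto simp: go_ne1 dl_go intro!: gr0I)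
  have 2: "R (go a c) (rev post @ rev pre @ 0 # z) [] (ret c) (rev post @ rev pre @ 0 # z) [a] 1"
    using H by (intro R_stay_end) (auto simp: go_ne1 dl_go intro!: gr0I)
  have 3: "R (ret c) (rev (pre @ post) @ 0 # z) (a # []) (ret c) (0 # z) ((pre @ post) @ a # []) (length (pre @ post))"
    using H by (intro R_retL) auto
  have 4: "R (ret c) (0 # z) (hd (pre @ post @ [a]) # tl (pre @ post @ [a])) (ret c) z (0 # hd (pre @ post @ [a]) # tl (pre @ post @ [a])) 1"
    using H by (intro R_lft) (auto simp: ret_ne1 dl_ret hd_append intro!: gr0I dest: hd_in_set)
  have 5: "R (ret c) z (0 # pre @ post @ [a]) c (0 # z) (pre @ post @ [a]) 1"
    using H by (intro R_rgt) (auto simp: ret_ne1 dl_ret)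
  have e: "hd (pre @ post @ [a]) # tl (pre @ post @ [a]) = pre @ post @ [a]" by simp
  have "R (go a c) (rev pre @ 0 # z) post c (0 # z) (pre @ post @ [a]) (length post + 1 + length (pre @ post) + 1 + 1)"
    using R_trans[OF R_trans[OF R_trans[OF R_trans[OF 1[simplified] 2] 3[simplified]] 4[unfolded e]] 5] by simp
  then show ?thesis by (rule R_mono) simp
qed


lemma op_consume: "c \<noteq> 1 \<Longrightarrow> dl c x = (go a c', 0, Rgt) \<Longrightarrow> c' < NC \<Longrightarrow> 1 \<le> a \<Longrightarrow> a \<le> 4 \<Longrightarrow>
  0 \<notin> set X \<Longrightarrow> length X \<le> Nb \<Longrightarrow> R c ls (x # X) c' (0 # ls) (X @ [a]) (2*Nb+10)"
proof -
  assume H: "c \<noteq> 1" "dl c x = (go a c', 0, Rgt)" "c' < NC" "1 \<le> a" "a \<le> 4" "0 \<notin> set X" "length X \<le> Nb"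
  have 1: "R c ls (x # X) (go a c') (0 # ls) X 1" using H by (intro R_rgt) auto
  have 2: "R (go a c') (0 # ls) X c' (0 # ls) (X @ [a]) (2 * length X + 3)"
    using H R_goret[of c' a "[]" X ls] by simp
  show ?thesis using R_trans[OF 1 2[simplified]] H by (elim R_mono) simp
qed

lemma op_seek_stay: "R c (0#z) (pre @ x # X) cc (rev pre @ 0 # z) (x # X) Bs \<Longrightarrow> Bs \<le> length pre \<Longrightarrow>
  cc \<noteq> 1 \<Longrightarrow> dl cc x = (go a c', x, Stay) \<Longrightarrow> c' < NC \<Longrightarrow> 1 \<le> a \<Longrightarrow> a \<le> 4 \<Longrightarrow> x \<noteq> 0 \<Longrightarrow>
  0 \<notin> set pre \<Longrightarrow> 0 \<notin> set X \<Longrightarrow> length pre + 1 + length X \<le> Nb \<Longrightarrow>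
  R c (0#z) (pre @ x # X) c' (0#z) (pre @ x # X @ [a]) (2*Nb+10)"
proof -
  assume S: "R c (0#z) (pre @ x # X) cc (rev pre @ 0 # z) (x # X) Bs" and
    H: "Bs \<le> length pre" "cc \<noteq> 1" "dl cc x = (go a c', x, Stay)" "c' < NC" "1 \<le> a" "a \<le> 4" "x \<noteq> 0"
       "0 \<notin> set pre" "0 \<notin> set X" "length pre + 1 + length X \<le> Nb"
  have 1: "R cc (rev pre @ 0 # z) (x # X) (go a c') (rev pre @ 0 # z) (x # X) 1" using H by (intro R_stay) auto
  have 2: "R (go a c') (rev pre @ 0 # z) (x # X) c' (0 # z) (pre @ (x # X) @ [a]) (length pre + 2 * length (x # X) + 3)"
    using H R_goret[of c' a pre "x # X" z] by simp
  show ?thesis using R_mono[OF R_trans[OF R_trans[OF S 1] 2], of "2*Nb+10"] H by simp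
qed

lemma op_seek_mark: "R c (0#z) (pre @ x # X) cc (rev pre @ 0 # z) (x # X) Bs \<Longrightarrow> Bs \<le> length pre \<Longrightarrow>
  cc \<noteq> 1 \<Longrightarrow> dl cc x = (go a c', m, Rgt) \<Longrightarrow> c' < NC \<Longrightarrow> 1 \<le> a \<Longrightarrow> a \<le> 4 \<Longrightarrow> m \<noteq> 0 \<Longrightarrow>
  0 \<notin> set pre \<Longrightarrow> 0 \<notin> set X \<Longrightarrow> length pre + 1 + length X \<le> Nb \<Longrightarrow>
  R c (0#z) (pre @ x # X) c' (0#z) (pre @ m # X @ [a]) (2*Nb+10)"
proof -
  assume S: "R c (0#z) (pre @ x # X) cc (rev pre @ 0 # z) (x # X) Bs" and
    H: "Bs \<le> length pre" "cc \<noteq> 1" "dl cc x = (go a c', m, Rgt)" "c' < NC" "1 \<le> a" "a \<le> 4" "m \<noteq> 0"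
       "0 \<notin> set pre" "0 \<notin> set X" "length pre + 1 + length X \<le> Nb"
  have 1: "R cc (rev pre @ 0 # z) (x # X) (go a c') (m # rev pre @ 0 # z) X 1" using H by (intro R_rgt) auto
  have 2: "R (go a c') (m # rev pre @ 0 # z) X c' (0 # z) (pre @ m # X @ [a]) (length pre + 1 + 2 * length X + 3)"
    using H R_goret[of c' a "pre @ [m]" X z] by simp
  show ?thesis using R_mono[OF R_trans[OF R_trans[OF S 1] 2], of "2*Nb+10"] H by simp
qed

lemma op_app: "(\<forall>x. dl c x = (go a c', x, Stay)) \<Longrightarrow> c \<noteq> 1 \<Longrightarrow> c' < NC \<Longrightarrow> 1 \<le> a \<Longrightarrow> a \<le> 4 \<Longrightarrow>
  C \<noteq> [] \<Longrightarrow> 0 \<notin> set C \<Longrightarrow> length C \<le> Nb \<Longrightarrow> R c (0#z) C c' (0#z) (C @ [a]) (2*Nb+10)"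
  using op_seek_stay[of c z "[]" "hd C" "tl C" c 0 a c' Nb] R_refl[of c "0#z" C]
  by (cases C) (auto intro!: gr0I)

lemma op_loop:
  assumes seek: "\<And>i Y. R c (0#z) (P @ replicate i m @ Y) cc (rev (P @ replicate i m) @ 0#z) Y (length P + i)"
    and H: "cc \<noteq> 1" "dl cc x = (go 1 c, m, Rgt)" "c < NC" "m \<noteq> 0" "x \<noteq> 0" "0 \<notin> set P"
  shows "0 \<notin> set T \<Longrightarrow> length P + i + 2*j + length T \<le> Nb \<Longrightarrow>
    R c (0#z) (P @ replicate i m @ replicate j x @ T) c (0#z) (P @ replicate (i+j) m @ T @ replicate j 1) (j*(2*Nb+10))"
proof (induction j arbitrary: i T)
  case 0 then show ?case by (simp add: R_refl)
next
  case (Suc j)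
  have 1: "R c (0#z) ((P @ replicate i m) @ x # (replicate j x @ T)) c (0#z) ((P @ replicate i m) @ m # (replicate j x @ T) @ [1]) (2*Nb+10)"
    apply (rule op_seek_mark[where pre="P @ replicate i m" and Bs="length P + i"])
    using H Suc.prems seek[of i "x # (replicate j x @ T)"] by auto
  have 2: "R c (0#z) (P @ replicate (Suc i) m @ replicate j x @ (T @ [1])) c (0#z) (P @ replicate (Suc i + j) m @ (T @ [1]) @ replicate j 1) (j*(2*Nb+10))"
    using Suc.prems by (intro Suc.IH) auto
  have e1: "(P @ replicate i m) @ m # (replicate j x @ T) @ [1] = P @ replicate (Suc i) m @ replicate j x @ (T @ [1])"
    by (simp add: replicate_app_Cons_same)
  have e2: "P @ replicate (Suc i + j) m @ (T @ [1]) @ replicate j 1 = P @ replicate (i + Suc j) m @ T @ replicate (Suc j) 1"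
    by (simp add: replicate_app_Cons_same)
  show ?case using R_trans[OF 1[unfolded e1] 2[unfolded e2]] by (simp add: add.commute)
qed



lemma dls:
  "dl 0 3 = (go 3 2, 0, Rgt)"
  "dl 2 3 = (go 3 20, 0, Rgt)" "dl 2 4 = (go 4 1, 0, Rgt)"
  "dl 3 1 = (go 1 3, 0, Rgt)" "dl 3 2 = (go 2 22, 0, Rgt)"
  "dl 4 3 = (go 3 5, 0, Rgt)"
  "dl 5 3 = (go 3 25, 0, Rgt)" "dl 5 4 = (go 4 27, 0, Rgt)"
  "dl 6 5 = (6, 5, Rgt)" "dl 6 1 = (go 1 6, 5, Rgt)" "dl 6 2 = (go 2 7, 2, Stay)"
  "dl 7 5 = (7, 5, Rgt)" "dl 7 2 = (8, 2, Rgt)"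
  "dl 8 5 = (8, 5, Rgt)" "dl 8 1 = (go 1 7, 5, Rgt)" "dl 8 2 = (go 2 29, 2, Stay)"
  "dl 9 5 = (9, 5, Rgt)" "dl 9 2 = (10, 2, Rgt)"
  "dl 10 6 = (10, 6, Rgt)" "dl 10 5 = (go 1 9, 6, Rgt)" "dl 10 2 = (go 2 11, 2, Stay)"
  "dl 11 7 = (11, 7, Rgt)" "dl 11 5 = (go 1 11, 7, Rgt)" "dl 11 2 = (go 2 34, 2, Stay)"
  "dl 12 4 = (5, 0, Rgt)" "x \<noteq> 4 \<Longrightarrow> dl 12 x = (12, 0, Rgt)"
  "dl 28 4 = (go 4 2, 0, Rgt)"
  by (simp_all add: dl_def ctrl_def NC_def)

lemma dls1:
  "dl 6 (Suc 0) = (go (Suc 0) 6, 5, Rgt)" "dl 8 (Suc 0) = (go (Suc 0) 7, 5, Rgt)" "dl 3 (Suc 0) = (go (Suc 0) 3, 0, Rgt)"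
  "dl 10 5 = (go (Suc 0) 9, 6, Rgt)" "dl 11 5 = (go (Suc 0) 11, 7, Rgt)"
  by (simp_all add: dl_def ctrl_def NC_def)

lemma dla:
  "\<forall>x. dl 20 x = (go 3 21, x, Stay)"
  "\<forall>x. dl 21 x = (go 3 3, x, Stay)"
  "\<forall>x. dl 22 x = (go 3 23, x, Stay)"
  "\<forall>x. dl 23 x = (go 4 24, x, Stay)"
  "\<forall>x. dl 24 x = (go 4 4, x, Stay)"
  "\<forall>x. dl 25 x = (go 2 26, x, Stay)"
  "\<forall>x. dl 26 x = (go 3 6, x, Stay)"
  "\<forall>x. dl 27 x = (go 4 28, x, Stay)"
  "\<forall>x. dl 29 x = (go 4 30, x, Stay)"
  "\<forall>x. dl 30 x = (go 4 31, x, Stay)"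
  "\<forall>x. dl 31 x = (go 3 32, x, Stay)"
  "\<forall>x. dl 32 x = (go 2 33, x, Stay)"
  "\<forall>x. dl 33 x = (go 3 9, x, Stay)"
  "\<forall>x. dl 34 x = (go 4 35, x, Stay)"
  "\<forall>x. dl 35 x = (go 4 12, x, Stay)"
  by (simp_all add: dl_def ctrl_def NC_def)

lemma NC_val: "NC = 36" by (simp add: NC_def)

lemma seek1: "c \<noteq> 1 \<Longrightarrow> dl c m = (c, m, Rgt) \<Longrightarrow>
  R c ls ([] @ replicate i m @ Y) c (rev ([] @ replicate i m) @ ls) Y (length [] + i)"
  using R_skip[of c "replicate i m" ls Y] by simp

lemma seek2: "c \<noteq> 1 \<Longrightarrow> cc \<noteq> 1 \<Longrightarrow> dl c a = (c, a, Rgt) \<Longrightarrow> dl c 2 = (cc, 2, Rgt) \<Longrightarrow> dl cc m = (cc, m, Rgt) \<Longrightarrow>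
  R c ls ((replicate u a @ [2]) @ replicate i m @ Y) cc (rev ((replicate u a @ [2]) @ replicate i m) @ ls) Y (length (replicate u a @ [2]) + i)"
proof -
  assume H: "c \<noteq> 1" "cc \<noteq> 1" "dl c a = (c, a, Rgt)" "dl c 2 = (cc, 2, Rgt)" "dl cc m = (cc, m, Rgt)"
  have 1: "R c ls (replicate u a @ 2 # replicate i m @ Y) c (replicate u a @ ls) (2 # replicate i m @ Y) u"
    using R_skip[of c "replicate u a" ls "2 # replicate i m @ Y"] H by simp
  have 2: "R c (replicate u a @ ls) (2 # replicate i m @ Y) cc (2 # replicate u a @ ls) (replicate i m @ Y) 1"
    using H by (intro R_rgt) auto
  have 3: "R cc (2 # replicate u a @ ls) (replicate i m @ Y) cc (replicate i m @ 2 # replicate u a @ ls) Y i"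
    using R_skip[of cc "replicate i m" "2 # replicate u a @ ls" Y] H by simp
  show ?thesis using R_trans[OF R_trans[OF 1 2] 3] by (simp add: add.commute)
qed



lemma edge_run:
  assumes Y: "0 \<notin> set Y" and L: "3*u + 3*v + 18 + length Y \<le> Nb"
  shows "R 5 (0#z) (3 # replicate u 1 @ 2 # replicate v 1 @ 2 # 4 # Y)
           5 (0 # replicate (u+v+4) 0 @ z)
           (Y @ [3,2,3] @ replicate u 1 @ 2 # replicate v 1 @ [2,4,4,3,2,3] @ replicate v 1 @ 2 # replicate u 1 @ [2,4,4])
           ((3*u+3*v+18)*(2*Nb+10))"
proof -
  let ?U = "2*Nb+10"
  let ?z = "0#0#z"
  have t1: "R 5 (0#z) (3 # replicate u 1 @ 2 # replicate v 1 @ 2 # 4 # Y) 25 ?z (replicate u 1 @ 2 # replicate v 1 @ 2 # 4 # Y @ [3]) ?U"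
    using op_consume[where c=5 and x=3 and a=3 and c'=25 and X="replicate u 1 @ 2 # replicate v 1 @ 2 # 4 # Y" and ls="0#z" and Nb=Nb]
      Y L by (simp add: dls dls1 NC_val)
  have t2: "R 25 ?z (replicate u 1 @ 2 # replicate v 1 @ 2 # 4 # Y @ [3]) 26 ?z (replicate u 1 @ 2 # replicate v 1 @ 2 # 4 # Y @ [3,2]) ?U"
    using op_app[where c=25 and a=2 and c'=26 and C="replicate u 1 @ 2 # replicate v 1 @ 2 # 4 # Y @ [3]" and z="0#z" and Nb=Nb]
      Y L by (simp add: dla NC_val)
  have t3: "R 26 ?z (replicate u 1 @ 2 # replicate v 1 @ 2 # 4 # Y @ [3,2]) 6 ?z (replicate u 1 @ 2 # replicate v 1 @ 2 # 4 # Y @ [3,2,3]) ?U"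
    using op_app[where c=26 and a=3 and c'=6 and C="replicate u 1 @ 2 # replicate v 1 @ 2 # 4 # Y @ [3,2]" and z="0#z" and Nb=Nb]
      Y L by (simp add: dla NC_val)
  have sB: "\<And>i Y. R 6 ?z ([] @ replicate i 5 @ Y) 6 (rev ([] @ replicate i 5) @ ?z) Y (length [] + i)"
    by (rule seek1) (simp_all add: dls)
  have t4: "R 6 ?z (replicate u 1 @ 2 # replicate v 1 @ 2 # 4 # Y @ [3,2,3]) 6 ?z (replicate u 5 @ 2 # replicate v 1 @ 2 # 4 # Y @ [3,2,3] @ replicate u 1) (u*?U)"
    using op_loop[OF sB, where x=1 and T="2 # replicate v 1 @ 2 # 4 # Y @ [3,2,3]" and Nb=Nb and i=0 and j=u]
      Y L by (simp add: dls dls1 NC_val)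
  have t5: "R 6 ?z (replicate u 5 @ 2 # replicate v 1 @ 2 # 4 # Y @ [3,2,3] @ replicate u 1) 7 ?z (replicate u 5 @ 2 # replicate v 1 @ 2 # 4 # Y @ [3,2,3] @ replicate u 1 @ [2]) ?U"
    using op_seek_stay[where c=6 and z="0#z" and pre="replicate u 5" and x=2 and X="replicate v 1 @ 2 # 4 # Y @ [3,2,3] @ replicate u 1" and Bs=u and cc=6 and a=2 and c'=7 and Nb=Nb]
      sB[of u "2 # replicate v 1 @ 2 # 4 # Y @ [3,2,3] @ replicate u 1"]
      Y L by (simp add: dls dls1 NC_val)
  have sC: "\<And>i Y. R 7 ?z ((replicate u 5 @ [2]) @ replicate i 5 @ Y) 8 (rev ((replicate u 5 @ [2]) @ replicate i 5) @ ?z) Y (length (replicate u (5::nat) @ [2]) + i)"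
    by (rule seek2) (simp_all add: dls)
  have t6: "R 7 ?z (replicate u 5 @ 2 # replicate v 1 @ 2 # 4 # Y @ [3,2,3] @ replicate u 1 @ [2]) 7 ?z
      (replicate u 5 @ 2 # replicate v 5 @ 2 # 4 # Y @ [3,2,3] @ replicate u 1 @ [2] @ replicate v 1) (v*?U)"
    using op_loop[OF sC, where x=1 and T="2 # 4 # Y @ [3,2,3] @ replicate u 1 @ [2]" and Nb=Nb and i=0 and j=v]
      Y L by (simp add: dls dls1 NC_val)
  have t7: "R 7 ?z (replicate u 5 @ 2 # replicate v 5 @ 2 # 4 # Y @ [3,2,3] @ replicate u 1 @ [2] @ replicate v 1) 29 ?z
      (replicate u 5 @ 2 # replicate v 5 @ 2 # 4 # Y @ [3,2,3] @ replicate u 1 @ [2] @ replicate v 1 @ [2]) ?U"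
    using op_seek_stay[where c=7 and z="0#z" and pre="replicate u 5 @ 2 # replicate v 5" and x=2 and X="4 # Y @ [3,2,3] @ replicate u 1 @ [2] @ replicate v 1" and Bs="u+1+v" and cc=8 and a=2 and c'=29 and Nb=Nb]
      sC[of v "2 # 4 # Y @ [3,2,3] @ replicate u 1 @ [2] @ replicate v 1"]
      Y L by (simp add: dls dls1 NC_val)
  let ?A = "replicate u 5 @ 2 # replicate v 5 @ 2 # 4 # Y"
  let ?O2 = "[3,2,3] @ replicate u 1 @ [2] @ replicate v 1 @ [2]"
  have t8: "R 29 ?z (?A @ ?O2) 9 ?z (?A @ ?O2 @ [4,4,3,2,3]) (5*?U)"
  proof -
    have a1: "R 29 ?z (?A @ ?O2) 30 ?z (?A @ ?O2 @ [4]) ?U"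
      using op_app[where c=29 and a=4 and c'=30 and C="?A @ ?O2" and z="0#z" and Nb=Nb] Y L by (simp add: dla NC_val)
    have a2: "R 30 ?z (?A @ ?O2 @ [4]) 31 ?z (?A @ ?O2 @ [4,4]) ?U"
      using op_app[where c=30 and a=4 and c'=31 and C="?A @ ?O2 @ [4]" and z="0#z" and Nb=Nb] Y L by (simp add: dla NC_val)
    have a3: "R 31 ?z (?A @ ?O2 @ [4,4]) 32 ?z (?A @ ?O2 @ [4,4,3]) ?U"
      using op_app[where c=31 and a=3 and c'=32 and C="?A @ ?O2 @ [4,4]" and z="0#z" and Nb=Nb] Y L by (simp add: dla NC_val)
    have a4: "R 32 ?z (?A @ ?O2 @ [4,4,3]) 33 ?z (?A @ ?O2 @ [4,4,3,2]) ?U"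
      using op_app[where c=32 and a=2 and c'=33 and C="?A @ ?O2 @ [4,4,3]" and z="0#z" and Nb=Nb] Y L by (simp add: dla NC_val)
    have a5: "R 33 ?z (?A @ ?O2 @ [4,4,3,2]) 9 ?z (?A @ ?O2 @ [4,4,3,2,3]) ?U"
      using op_app[where c=33 and a=3 and c'=9 and C="?A @ ?O2 @ [4,4,3,2]" and z="0#z" and Nb=Nb] Y L by (simp add: dla NC_val)
    show ?thesis using R_trans[OF R_trans[OF R_trans[OF R_trans[OF a1 a2] a3] a4] a5] by simp
  qed
  let ?O3 = "?O2 @ [4,4,3,2,3]"
  have sD: "\<And>i Y. R 9 ?z ((replicate u 5 @ [2]) @ replicate i 6 @ Y) 10 (rev ((replicate u 5 @ [2]) @ replicate i 6) @ ?z) Y (length (replicate u (5::nat) @ [2]) + i)"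
    by (rule seek2) (simp_all add: dls)
  have t9: "R 9 ?z (?A @ ?O3) 9 ?z (replicate u 5 @ 2 # replicate v 6 @ 2 # 4 # Y @ ?O3 @ replicate v 1) (v*?U)"
    using op_loop[OF sD, where x=5 and T="2 # 4 # Y @ ?O3" and Nb=Nb and i=0 and j=v]
      Y L by (simp add: dls dls1 NC_val)
  have t10: "R 9 ?z (replicate u 5 @ 2 # replicate v 6 @ 2 # 4 # Y @ ?O3 @ replicate v 1) 11 ?z
     (replicate u 5 @ 2 # replicate v 6 @ 2 # 4 # Y @ ?O3 @ replicate v 1 @ [2]) ?U"
    using op_seek_stay[where c=9 and z="0#z" and pre="replicate u 5 @ 2 # replicate v 6" and x=2 and X="4 # Y @ ?O3 @ replicate v 1" and Bs="u+1+v" and cc=10 and a=2 and c'=11 and Nb=Nb]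
      sD[of v "2 # 4 # Y @ ?O3 @ replicate v 1"] Y L by (simp add: dls NC_val)
  let ?O4 = "?O3 @ replicate v 1 @ [2]"
  have sE: "\<And>i Y. R 11 ?z ([] @ replicate i 7 @ Y) 11 (rev ([] @ replicate i 7) @ ?z) Y (length [] + i)"
    by (rule seek1) (simp_all add: dls)
  have t11: "R 11 ?z (replicate u 5 @ 2 # replicate v 6 @ 2 # 4 # Y @ ?O4) 11 ?z (replicate u 7 @ 2 # replicate v 6 @ 2 # 4 # Y @ ?O4 @ replicate u 1) (u*?U)"
    using op_loop[OF sE, where x=5 and T="2 # replicate v 6 @ 2 # 4 # Y @ ?O4" and Nb=Nb and i=0 and j=u]
      Y L by (simp add: dls dls1 NC_val)
  let ?B = "replicate u 7 @ 2 # replicate v 6 @ 2 # 4 # Y @ ?O4 @ replicate u 1"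
  have t12a: "R 11 ?z ?B 34 ?z (?B @ [2]) ?U"
    using op_seek_stay[where c=11 and z="0#z" and pre="replicate u 7" and x=2 and X="replicate v 6 @ 2 # 4 # Y @ ?O4 @ replicate u 1" and Bs="u" and cc=11 and a=2 and c'=34 and Nb=Nb]
      sE[of u "2 # replicate v 6 @ 2 # 4 # Y @ ?O4 @ replicate u 1"] Y L by (simp add: dls NC_val)
  have t12b: "R 34 ?z (?B @ [2]) 35 ?z (?B @ [2,4]) ?U"
    using op_app[where c=34 and a=4 and c'=35 and C="?B @ [2]" and z="0#z" and Nb=Nb] Y L by (simp add: dla NC_val)
  have t12c: "R 35 ?z (?B @ [2,4]) 12 ?z (?B @ [2,4,4]) ?U"
    using op_app[where c=35 and a=4 and c'=12 and C="?B @ [2,4]" and z="0#z" and Nb=Nb] Y L by (simp add: dla NC_val)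
  let ?O5 = "?O4 @ replicate u 1 @ [2,4,4]"
  have t13h: "\<forall>y\<in>set (replicate u (7::nat) @ 2 # replicate v 6 @ [2]). dl 12 y = (12, 0, Rgt)"
    by (auto simp: dls)
  have t13a: "R 12 ?z ((replicate u 7 @ 2 # replicate v 6 @ [2]) @ 4 # Y @ ?O5) 12 (replicate (u+v+2) 0 @ ?z) (4 # Y @ ?O5) (u+v+2)"
    using R_eat[OF _ t13h, of ?z "4 # Y @ ?O5"] by simp
  have t13b: "R 12 (replicate (u+v+2) 0 @ ?z) (4 # Y @ ?O5) 5 (0 # replicate (u+v+2) 0 @ ?z) (Y @ ?O5) 1"
    by (rule R_rgt) (simp_all add: dls)
  have c1: "R 5 (0#z) (3 # replicate u 1 @ 2 # replicate v 1 @ 2 # 4 # Y) 6 ?z (replicate u 1 @ 2 # replicate v 1 @ 2 # 4 # Y @ [3,2,3]) (?U + ?U + ?U)"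
    using R_trans[OF R_trans[OF t1 t2] t3] by simp
  have c2: "R 6 ?z (replicate u 1 @ 2 # replicate v 1 @ 2 # 4 # Y @ [3,2,3]) 29 ?z (?A @ ?O2) (u*?U + ?U + v*?U + ?U)"
    using R_trans[OF R_trans[OF R_trans[OF t4 t5] t6] t7] by (simp add: add.assoc)
  have c3: "R 29 ?z (?A @ ?O2) 11 ?z (replicate u 5 @ 2 # replicate v 6 @ 2 # 4 # Y @ ?O4) (5*?U + v*?U + ?U)"
    using R_trans[OF R_trans[OF t8 t9] t10] by (simp add: add.assoc)
  have c4: "R 11 ?z (replicate u 5 @ 2 # replicate v 6 @ 2 # 4 # Y @ ?O4) 12 ?z ((replicate u 7 @ 2 # replicate v 6 @ [2]) @ 4 # Y @ ?O5) (u*?U + ?U + ?U + ?U)"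
    using R_trans[OF R_trans[OF R_trans[OF t11 t12a] t12b] t12c] by simp
  have c5: "R 12 ?z ((replicate u 7 @ 2 # replicate v 6 @ [2]) @ 4 # Y @ ?O5) 5 (0 # replicate (u+v+2) 0 @ ?z) (Y @ ?O5) (u+v+2+1)"
    using R_trans[OF t13a t13b[unfolded]] by simp
  have all: "R 5 (0#z) (3 # replicate u 1 @ 2 # replicate v 1 @ 2 # 4 # Y) 5 (0 # replicate (u+v+2) 0 @ ?z) (Y @ ?O5)
     (?U + ?U + ?U + (u*?U + ?U + v*?U + ?U) + (5*?U + v*?U + ?U) + (u*?U + ?U + ?U + ?U) + (u+v+2+1))"
    using R_trans[OF R_trans[OF R_trans[OF R_trans[OF c1 c2] c3] c4] c5] by simp
  have le: "?U + ?U + ?U + (u*?U + ?U + v*?U + ?U) + (5*?U + v*?U + ?U) + (u*?U + ?U + ?U + ?U) + (u+v+2+1) \<le> (3*u+3*v+18)*(2*Nb+10)"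
    by (simp add: algebra_simps)
  have ls: "0 # replicate (u+v+2) 0 @ ?z = 0 # replicate (u+v+4) 0 @ z"
    by (simp add: replicate_app_Cons_same numeral_eq_Suc)
  show ?thesis using R_mono[OF all le] unfolding ls by simp
qed



fun encE :: "nat \<times> nat \<Rightarrow> nat list" where
  "encE (u, v) = 3 # replicate u 1 @ 2 # replicate v 1 @ [2,4]"

fun encEL :: "nat \<times> nat \<Rightarrow> nat list" where
  "encEL (u, v) = [3,2,3] @ replicate u 1 @ 2 # replicate v 1 @ [2,4,4,3,2,3] @ replicate v 1 @ 2 # replicate u 1 @ [2,4,4]"

lemma encE_nz: "0 \<notin> set (encE e)" by (cases e) auto
lemma encEL_nz: "0 \<notin> set (encEL e)" by (cases e) auto
lemma concat_encE_nz: "0 \<notin> set (concat (map encE es))" using encE_nz by auto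
lemma concat_encEL_nz: "0 \<notin> set (concat (map encEL es))" using encEL_nz by auto

lemma edges_run:
  "0 \<notin> set Y \<Longrightarrow> set z \<subseteq> {0} \<Longrightarrow>
   length (concat (map encE es)) + length Y + length (concat (map encEL es)) \<le> Nb \<Longrightarrow>
   \<exists>z'. set z' \<subseteq> {0} \<and> R 5 (0#z) (concat (map encE es) @ Y) 5 (0 # z') (Y @ concat (map encEL es))
      ((length (concat (map encE es)) + length (concat (map encEL es))) * (2*Nb+10))"
proof (induction es arbitrary: z Y)
  case Nil then show ?case using R_refl by auto
next
  case (Cons e es)
  obtain u v where e: "e = (u, v)" by (cases e)
  have 1: "R 5 (0#z) (encE e @ concat (map encE es) @ Y) 5 (0 # replicate (u+v+4) 0 @ z)
           (concat (map encE es) @ Y @ encEL e) ((3*u+3*v+18)*(2*Nb+10))"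
    using edge_run[of "concat (map encE es) @ Y" u v Nb z] Cons.prems concat_encE_nz[of es] by (simp add: e)
  have "set (replicate (u+v+4) 0 @ z) \<subseteq> {0}" using Cons.prems by auto
  moreover have "0 \<notin> set (Y @ encEL e)" using Cons.prems encEL_nz by auto
  moreover have "length (concat (map encE es)) + length (Y @ encEL e) + length (concat (map encEL es)) \<le> Nb"
    using Cons.prems by (simp add: e)
  ultimately obtain z' where z': "set z' \<subseteq> {0}" and
    2: "R 5 (0 # replicate (u+v+4) 0 @ z) (concat (map encE es) @ (Y @ encEL e)) 5 (0 # z') ((Y @ encEL e) @ concat (map encEL es))
      ((length (concat (map encE es)) + length (concat (map encEL es))) * (2*Nb+10))"
    using Cons.IH by blast
  have 3: "R 5 (0#z) (concat (map encE (e # es)) @ Y) 5 (0 # z') (Y @ concat (map encEL (e # es)))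
      ((3*u+3*v+18)*(2*Nb+10) + (length (concat (map encE es)) + length (concat (map encEL es))) * (2*Nb+10))"
    using R_trans[OF 1 2] by (simp add: e)
  have le: "(3*u+3*v+18)*(2*Nb+10) + (length (concat (map encE es)) + length (concat (map encEL es))) * (2*Nb+10)
     \<le> (length (concat (map encE (e # es))) + length (concat (map encEL (e # es)))) * (2*Nb+10)"
    by (simp add: e algebra_simps)
  show ?case using R_mono[OF 3 le] z' by blast
qed

lemma copyN: "0 \<notin> set X \<Longrightarrow> length X + n \<le> Nb \<Longrightarrow>
  R 3 (0#z) (replicate n 1 @ X) 3 (0 # replicate n 0 @ z) (X @ replicate n 1) (n*(2*Nb+10))"
proof (induction n arbitrary: z X)
  case 0 then show ?case by (simp add: R_refl)
next
  case (Suc n)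
  have 1: "R 3 (0#z) (1 # replicate n 1 @ X) 3 (0#0#z) (replicate n 1 @ X @ [1]) (2*Nb+10)"
    using op_consume[where c=3 and x=1 and a=1 and c'=3 and X="replicate n 1 @ X" and ls="0#z" and Nb=Nb] Suc.prems by (simp add: dls dls1 NC_val)
  have 2: "R 3 (0#0#z) (replicate n 1 @ (X @ [1])) 3 (0 # replicate n 0 @ 0 # z) ((X @ [1]) @ replicate n 1) (n*(2*Nb+10))"
    using Suc.IH[of "X @ [1]" "0#z"] Suc.prems by simp
  show ?case using R_trans[OF 1 2] by (simp add: replicate_app_Cons_same)
qed



lemma graph_run:
  fixes n :: nat and es :: "(nat \<times> nat) list"
  defines "EE \<equiv> concat (map encE es)" and "LL \<equiv> concat (map encEL es)"
  assumes Y: "0 \<notin> set Y" and z: "set z \<subseteq> {0}"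
    and len: "length (3 # replicate n 1 @ [2,3] @ EE @ [4,4]) + length Y + length ([3,3,3] @ replicate n 1 @ [2,3,4,4,3] @ LL @ [4,4,4]) \<le> Nb"
  shows "\<exists>z'. set z' \<subseteq> {0} \<and> R 2 (0#z) ((3 # replicate n 1 @ [2,3] @ EE @ [4,4]) @ Y) 2 (0#z')
           (Y @ ([3,3,3] @ replicate n 1 @ [2,3,4,4,3] @ LL @ [4,4,4]))
           ((length (3 # replicate n 1 @ [2,3] @ EE @ [4,4]) + length ([3,3,3] @ replicate n 1 @ [2,3,4,4,3] @ LL @ [4,4,4])) * (2*Nb+10))"
proof -
  let ?U = "2*Nb+10"
  have EN: "0 \<notin> set EE" unfolding EE_def by (rule concat_encE_nz)
  have LN: "0 \<notin> set LL" unfolding LL_def by (rule concat_encEL_nz)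
  have l2: "length EE + length Y + length LL + 2*n + 16 \<le> Nb" using len by simp
  have g1: "R 2 (0#z) ((3 # replicate n 1 @ [2,3] @ EE @ [4,4]) @ Y) 20 (0#0#z) (replicate n 1 @ 2 # 3 # EE @ 4 # 4 # Y @ [3]) ?U"
    using op_consume[where c=2 and x=3 and a=3 and c'=20 and X="replicate n 1 @ 2 # 3 # EE @ 4 # 4 # Y" and ls="0#z" and Nb=Nb]
      Y EN l2 by (simp add: dls NC_val)
  have g2: "R 20 (0#0#z) (replicate n 1 @ 2 # 3 # EE @ 4 # 4 # Y @ [3]) 21 (0#0#z) (replicate n 1 @ 2 # 3 # EE @ 4 # 4 # Y @ [3,3]) ?U"
    using op_app[where c=20 and a=3 and c'=21 and C="replicate n 1 @ 2 # 3 # EE @ 4 # 4 # Y @ [3]" and z="0#z" and Nb=Nb]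
      Y EN l2 by (simp add: dla NC_val)
  have g3: "R 21 (0#0#z) (replicate n 1 @ 2 # 3 # EE @ 4 # 4 # Y @ [3,3]) 3 (0#0#z) (replicate n 1 @ 2 # 3 # EE @ 4 # 4 # Y @ [3,3,3]) ?U"
    using op_app[where c=21 and a=3 and c'=3 and C="replicate n 1 @ 2 # 3 # EE @ 4 # 4 # Y @ [3,3]" and z="0#z" and Nb=Nb]
      Y EN l2 by (simp add: dla NC_val)
  let ?z2 = "replicate n 0 @ 0 # z"
  have g4: "R 3 (0#0#z) (replicate n 1 @ 2 # 3 # EE @ 4 # 4 # Y @ [3,3,3]) 3 (0 # ?z2) (2 # 3 # EE @ 4 # 4 # Y @ [3,3,3] @ replicate n 1) (n*?U)"
    using copyN[where X="2 # 3 # EE @ 4 # 4 # Y @ [3,3,3]" and n=n and Nb=Nb and z="0#z"] Y EN l2 by simp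
  let ?C = "3 # EE @ 4 # 4 # Y @ [3,3,3] @ replicate n 1"
  have g5: "R 3 (0 # ?z2) (2 # 3 # EE @ 4 # 4 # Y @ [3,3,3] @ replicate n 1) 22 (0#0#?z2) (?C @ [2]) ?U"
    using op_consume[where c=3 and x=2 and a=2 and c'=22 and X="?C" and ls="0#?z2" and Nb=Nb]
      Y EN l2 by (simp add: dls NC_val)
  have g6: "R 22 (0#0#?z2) (?C @ [2]) 23 (0#0#?z2) (?C @ [2,3]) ?U"
    using op_app[where c=22 and a=3 and c'=23 and C="?C @ [2]" and z="0#?z2" and Nb=Nb] Y EN l2 by (simp add: dla NC_val)
  have g7: "R 23 (0#0#?z2) (?C @ [2,3]) 24 (0#0#?z2) (?C @ [2,3,4]) ?U"
    using op_app[where c=23 and a=4 and c'=24 and C="?C @ [2,3]" and z="0#?z2" and Nb=Nb] Y EN l2 by (simp add: dla NC_val)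
  have g8: "R 24 (0#0#?z2) (?C @ [2,3,4]) 4 (0#0#?z2) (?C @ [2,3,4,4]) ?U"
    using op_app[where c=24 and a=4 and c'=4 and C="?C @ [2,3,4]" and z="0#?z2" and Nb=Nb] Y EN l2 by (simp add: dla NC_val)
  let ?Y1 = "4 # 4 # Y @ [3,3,3] @ replicate n 1 @ [2,3,4,4,3]"
  have g9: "R 4 (0#0#?z2) (?C @ [2,3,4,4]) 5 (0#0#0#?z2) (EE @ ?Y1) ?U"
    using op_consume[where c=4 and x=3 and a=3 and c'=5 and X="EE @ 4 # 4 # Y @ [3,3,3] @ replicate n 1 @ [2,3,4,4]" and ls="0#0#?z2" and Nb=Nb]
      Y EN l2 by (simp add: dls NC_val)
  have "set (0#0#?z2) \<subseteq> {0}" using z by auto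
  moreover have "0 \<notin> set ?Y1" using Y by auto
  moreover have "length EE + length ?Y1 + length LL \<le> Nb" using l2 by simp
  ultimately obtain z3 where z3: "set z3 \<subseteq> {0}" and
    g10: "R 5 (0#0#0#?z2) (EE @ ?Y1) 5 (0#z3) (?Y1 @ LL) ((length EE + length LL) * ?U)"
    using edges_run[of ?Y1 "0#0#?z2" es Nb] unfolding EE_def LL_def by blast
  let ?D = "Y @ [3,3,3] @ replicate n 1 @ [2,3,4,4,3] @ LL"
  have g11: "R 5 (0#z3) (?Y1 @ LL) 27 (0#0#z3) (4 # ?D @ [4]) ?U"
    using op_consume[where c=5 and x=4 and a=4 and c'=27 and X="4 # ?D" and ls="0#z3" and Nb=Nb]
      Y LN l2 by (simp add: dls NC_val)
  have g12: "R 27 (0#0#z3) (4 # ?D @ [4]) 28 (0#0#z3) (4 # ?D @ [4,4]) ?U"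
    using op_app[where c=27 and a=4 and c'=28 and C="4 # ?D @ [4]" and z="0#z3" and Nb=Nb] Y LN l2 by (simp add: dla NC_val)
  have g13: "R 28 (0#0#z3) (4 # ?D @ [4,4]) 2 (0#0#0#z3) (?D @ [4,4,4]) ?U"
    using op_consume[where c=28 and x=4 and a=4 and c'=2 and X="?D @ [4,4]" and ls="0#0#z3" and Nb=Nb]
      Y LN l2 by (simp add: dls NC_val)
  have all: "R 2 (0#z) ((3 # replicate n 1 @ [2,3] @ EE @ [4,4]) @ Y) 2 (0#0#0#z3) (?D @ [4,4,4])
     (?U + ?U + ?U + n*?U + ?U + ?U + ?U + ?U + ?U + (length EE + length LL) * ?U + ?U + ?U + ?U)"
    using R_trans[OF R_trans[OF R_trans[OF R_trans[OF R_trans[OF R_trans[OF R_trans[OF R_trans[OF R_trans[OF R_trans[OF R_trans[OF R_trans[OF g1 g2] g3] g4] g5] g6] g7] g8] g9] g10] g11] g12] g13] .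
  have le: "?U + ?U + ?U + n*?U + ?U + ?U + ?U + ?U + ?U + (length EE + length LL) * ?U + ?U + ?U + ?U
     \<le> (length (3 # replicate n 1 @ [2,3] @ EE @ [4,4]) + length ([3,3,3] @ replicate n 1 @ [2,3,4,4,3] @ LL @ [4,4,4])) * (2*Nb+10)"
    by (simp add: algebra_simps)
  have "set (0#0#z3) \<subseteq> {0}" using z3 by auto
  then show ?thesis using R_mono[OF all le] by (intro exI[of _ "0#0#z3"]) simp
qed



lemma encEL_le: "length (concat (map encEL es)) \<le> 4 * length (concat (map encE es))"
proof (induction es)
  case Nil then show ?case by simp
next
  case (Cons e es) then show ?case by (cases e) auto
qed

lemma top_run:
  fixes n1 n2 :: nat and es1 es2 :: "(nat \<times> nat) list"
  defines "G1 \<equiv> 3 # replicate n1 1 @ [2,3] @ concat (map encE es1) @ [4,4]"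
    and "G2 \<equiv> 3 # replicate n2 1 @ [2,3] @ concat (map encE es2) @ [4,4]"
    and "H1 \<equiv> [3,3,3] @ replicate n1 1 @ [2,3,4,4,3] @ concat (map encEL es1) @ [4,4,4]"
    and "H2 \<equiv> [3,3,3] @ replicate n2 1 @ [2,3,4,4,3] @ concat (map encEL es2) @ [4,4,4]"
  shows "computes_within TM (50 * (length (3 # G1 @ G2 @ [4]) + 1)^2) (3 # G1 @ G2 @ [4]) (3 # H1 @ H2 @ [4])"
proof -
  let ?w = "3 # G1 @ G2 @ [4]"
  let ?O = "3 # H1 @ H2 @ [4]"
  define Nb where "Nb = length ?w + length ?O"
  let ?U = "2*Nb+10"
  have nzG1: "0 \<notin> set G1" "0 \<notin> set G2" "0 \<notin> set H1" "0 \<notin> set H2"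
    unfolding G1_def G2_def H1_def H2_def using concat_encE_nz concat_encEL_nz by auto
  have t1: "R 0 [] (3 # G1 @ G2 @ [4]) 2 (0#[]) (G1 @ G2 @ [4,3]) ?U"
    using op_consume[where c=0 and x=3 and a=3 and c'=2 and X="G1 @ G2 @ [4]" and ls="[]" and Nb=Nb]
      nzG1 by (simp add: dls NC_val Nb_def)
  obtain z1 where z1: "set z1 \<subseteq> {0}" and
    t2: "R 2 (0#[]) (G1 @ (G2 @ [4,3])) 2 (0#z1) ((G2 @ [4,3]) @ H1) ((length G1 + length H1) * ?U)"
    using graph_run[of "G2 @ [4,3]" "[]" n1 es1 Nb, folded G1_def H1_def] nzG1
    by (auto simp: Nb_def)
  obtain z2 where z2: "set z2 \<subseteq> {0}" and
    t3: "R 2 (0#z1) (G2 @ ([4,3] @ H1)) 2 (0#z2) (([4,3] @ H1) @ H2) ((length G2 + length H2) * ?U)"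
    using graph_run[of "[4,3] @ H1" z1 n2 es2 Nb, folded G2_def H2_def] nzG1 z1
    by (auto simp: Nb_def)
  have t4: "R 2 (0#z2) (4 # 3 # H1 @ H2) 1 (0#0#z2) (3 # H1 @ H2 @ [4]) ?U"
    using op_consume[where c=2 and x=4 and a=4 and c'=1 and X="3 # H1 @ H2" and ls="0#z2" and Nb=Nb]
      nzG1 by (simp add: dls NC_val Nb_def)
  have all: "R 0 [] ?w 1 (0#0#z2) ?O (?U + (length G1 + length H1) * ?U + (length G2 + length H2) * ?U + ?U)"
    using R_trans[OF R_trans[OF R_trans[OF t1 t2[simplified]] t3[simplified]] t4] by simp
  have lenH1: "length H1 \<le> 4 * length G1" unfolding H1_def G1_def using encEL_le[of es1] by simp
  have lenH2: "length H2 \<le> 4 * length G2" unfolding H2_def G2_def using encEL_le[of es2] by simp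
  let ?m = "length ?w"
  have lO: "length ?O \<le> 4 * ?m" using lenH1 lenH2 by simp
  have B1: "?U + (length G1 + length H1) * ?U + (length G2 + length H2) * ?U + ?U \<le> Nb * ?U"
    by (simp add: Nb_def algebra_simps)
  have "Nb \<le> 5 * ?m" using lO by (simp add: Nb_def)
  then have "Nb * ?U \<le> (5 * ?m) * (2 * (5 * ?m) + 10)" by (intro mult_mono) auto
  also have "\<dots> \<le> 50 * (?m + 1)^2" by (simp add: power2_eq_square algebra_simps)
  finally have le: "?U + (length G1 + length H1) * ?U + (length G2 + length H2) * ?U + ?U \<le> 50 * (?m + 1)^2"
    using B1 by linarith
  have "R 0 [] ?w 1 (0#0#z2) ?O (50 * (?m + 1)^2)" using R_mono[OF all le] .
  then obtain t k' where "t \<le> 50 * (?m + 1)^2" "run TM t (0, [], ?w @ replicate 0 0) = (1, 0#0#z2, ?O @ replicate k' 0)"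
    unfolding R_def by blast
  then show ?thesis unfolding computes_within_def using z2 by auto
qed



definition rcode :: "graph_code \<Rightarrow> rule_code" where
  "rcode g = (Lit (fst g) [], concat (map (\<lambda>(u,v). [Lit 0 [u,v], Lit 0 [v,u]]) (snd g)))"

lemma enc_edge_fun: "enc \<circ> (\<lambda>(u,v). L [N u, N v]) = encE"
  by (rule ext) auto

lemma enc_graph: "enc (graph_obj g) = 3 # replicate (fst g) 1 @ [2,3] @ concat (map encE (snd g)) @ [4,4]"
  by (simp add: graph_obj_def enc_edge_fun)

lemma enc_lits: "concat (map (enc \<circ> lit_obj) (concat (map (\<lambda>(u,v). [Lit 0 [u,v], Lit 0 [v,u]]) es))) = concat (map encEL es)"
proof (induction es)
  case Nil then show ?case by simp
next
  case (Cons e es) then show ?case by (cases e) (simp add: lit_obj_def)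
qed

lemma enc_hyp: "enc (hyp_obj [rcode g]) = [3,3,3] @ replicate (fst g) 1 @ [2,3,4,4,3] @ concat (map encEL (snd g)) @ [4,4,4]"
  using enc_lits[of "snd g"] by (simp add: hyp_obj_def rule_obj_def rcode_def lit_obj_def)

lemma body_rcode: "l \<in> body (to_rule (rcode g)) \<longleftrightarrow> (\<exists>u v. l = Lit 0 [u,v] \<and> {u,v} \<in> edges g)"
  by (auto simp: to_rule_def rcode_def edges_def doubleton_eq_iff)

lemma head_rcode: "head (to_rule (rcode g)) = Lit (fst g) []"
  by (simp add: to_rule_def rcode_def)

lemma bov_rcode: "body_only_vars (to_rule (rcode g)) = {x. \<exists>y. {x,y} \<in> edges g}"
proof -
  have "body_vars (to_rule (rcode g)) = {x. \<exists>y. {x,y} \<in> edges g}"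
    unfolding body_vars_def vars_def
    apply (auto simp: body_rcode)
      apply blast
     apply (metis insert_commute)
    apply (rule_tac x="Lit 0 [x,y]" in bexI)
     apply (auto simp: body_rcode)
    done
  moreover have "head_vars (to_rule (rcode g)) = {}" by (simp add: head_vars_def head_rcode vars_def)
  ultimately show ?thesis by (simp add: body_only_vars_def)
qed

lemma edge_valid: "valid_graph g \<Longrightarrow> {u,v} \<in> edges g \<Longrightarrow> u < fst g \<and> v < fst g"
  by (auto simp: valid_graph_def edges_def doubleton_eq_iff)

lemma lit_rename_lit: "lit_rename f (Lit p xs) = Lit p (map f xs)" by (simp add: lit_rename_def)

lemma iso_sym: "graph_iso g1 g2 \<Longrightarrow> graph_iso g2 g1"
proof -
  assume "graph_iso g1 g2"
  then obtain f where f: "bij_betw f {..<fst g1} {..<fst g2}"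
    and e: "\<forall>u<fst g1. \<forall>v<fst g1. {u, v} \<in> edges g1 \<longleftrightarrow> {f u, f v} \<in> edges g2"
    unfolding graph_iso_def by blast
  let ?h = "inv_into {..<fst g1} f"
  have h: "bij_betw ?h {..<fst g2} {..<fst g1}" using f by (rule bij_betw_inv_into)
  have "\<forall>u<fst g2. \<forall>v<fst g2. {u, v} \<in> edges g2 \<longleftrightarrow> {?h u, ?h v} \<in> edges g1"
  proof (intro allI impI)
    fix u v assume uv: "u < fst g2" "v < fst g2"
    have hu: "?h u < fst g1" "?h v < fst g1" using h uv by (auto simp: bij_betw_def)
    have "f (?h u) = u" "f (?h v) = v" using f uv by (auto simp: bij_betw_def f_inv_into_f)
    then show "{u, v} \<in> edges g2 \<longleftrightarrow> {?h u, ?h v} \<in> edges g1" using e hu by metis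
  qed
  then show ?thesis using h unfolding graph_iso_def by blast
qed

lemma iso_bv:
  assumes v1: "valid_graph g1" and v2: "valid_graph g2" and iso: "graph_iso g1 g2"
  shows "is_body_variant (to_rule (rcode g2)) (to_rule (rcode g1))"
proof -
  obtain f where f: "bij_betw f {..<fst g1} {..<fst g2}"
    and e: "\<forall>u<fst g1. \<forall>v<fst g1. {u, v} \<in> edges g1 \<longleftrightarrow> {f u, f v} \<in> edges g2"
    using iso unfolding graph_iso_def by blast
  have n: "fst g1 = fst g2" using bij_betw_same_card[OF f] by simp
  let ?V1 = "{x. \<exists>y. {x,y} \<in> edges g1}" and ?V2 = "{x. \<exists>y. {x,y} \<in> edges g2}"
  have V1: "?V1 \<subseteq> {..<fst g1}" using edge_valid[OF v1] by auto
  have injf: "inj_on f {..<fst g1}" using f by (auto simp: bij_betw_def)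
  have surj: "\<And>x. x < fst g2 \<Longrightarrow> \<exists>u<fst g1. f u = x" using f unfolding bij_betw_def by (metis imageE lessThan_iff)
  have img: "f ` ?V1 = ?V2"
  proof
    show "f ` ?V1 \<subseteq> ?V2"
    proof
      fix x assume "x \<in> f ` ?V1"
      then obtain u y where "x = f u" "{u,y} \<in> edges g1" by auto
      moreover then have "u < fst g1" "y < fst g1" using edge_valid[OF v1] by auto
      ultimately show "x \<in> ?V2" using e by auto
    qed
  next
    show "?V2 \<subseteq> f ` ?V1"
    proof
      fix x assume "x \<in> ?V2"
      then obtain y where xy: "{x,y} \<in> edges g2" by auto
      then have "x < fst g2" "y < fst g2" using edge_valid[OF v2] by auto
      then obtain u w where "u < fst g1" "w < fst g1" "f u = x" "f w = y" using surj by metis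
      then show "x \<in> f ` ?V1" using e xy by auto
    qed
  qed
  have bij: "bij_betw f ?V1 ?V2" unfolding bij_betw_def using img inj_on_subset[OF injf V1] by simp
  let ?r = "\<lambda>x. if x \<in> ?V1 then f x else x"
  have body: "lit_rename ?r ` body (to_rule (rcode g1)) = body (to_rule (rcode g2))"
  proof
    show "lit_rename ?r ` body (to_rule (rcode g1)) \<subseteq> body (to_rule (rcode g2))"
    proof
      fix l assume "l \<in> lit_rename ?r ` body (to_rule (rcode g1))"
      then obtain u v where uv: "l = lit_rename ?r (Lit 0 [u,v])" "{u,v} \<in> edges g1" by (auto simp: body_rcode)
      then have "u \<in> ?V1" "v \<in> ?V1" by (auto simp: insert_commute)
      moreover have "u < fst g1" "v < fst g1" using edge_valid[OF v1 uv(2)] by auto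
      ultimately show "l \<in> body (to_rule (rcode g2))" using uv e by (auto simp: body_rcode lit_rename_lit)
    qed
  next
    show "body (to_rule (rcode g2)) \<subseteq> lit_rename ?r ` body (to_rule (rcode g1))"
    proof
      fix l assume "l \<in> body (to_rule (rcode g2))"
      then obtain x y where xy: "l = Lit 0 [x,y]" "{x,y} \<in> edges g2" by (auto simp: body_rcode)
      then have "x < fst g2" "y < fst g2" using edge_valid[OF v2] by auto
      then obtain u w where uw: "u < fst g1" "w < fst g1" "f u = x" "f w = y" using surj by metis
      then have E1: "{u,w} \<in> edges g1" using e xy by auto
      then have "u \<in> ?V1" "w \<in> ?V1" by (auto simp: insert_commute)
      then have "l = lit_rename ?r (Lit 0 [u,w])" using xy uw by (simp add: lit_rename_lit)
      moreover have "Lit 0 [u,w] \<in> body (to_rule (rcode g1))" using E1 by (auto simp: body_rcode)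
      ultimately show "l \<in> lit_rename ?r ` body (to_rule (rcode g1))" by blast
    qed
  qed
  have "rule_rename ?r (to_rule (rcode g1)) = to_rule (rcode g2)"
    using body n by (simp add: rule_rename_def head_rcode lit_rename_lit) (simp add: to_rule_def rcode_def)
  then show ?thesis unfolding is_body_variant_def bov_rcode using bij by blast
qed



lemma bv_iso:
  assumes v1: "valid_graph g1" and v2: "valid_graph g2"
    and bv: "is_body_variant (to_rule (rcode g2)) (to_rule (rcode g1))"
  shows "graph_iso g1 g2"
proof -
  let ?V1 = "{x. \<exists>y. {x,y} \<in> edges g1}" and ?V2 = "{x. \<exists>y. {x,y} \<in> edges g2}"
  obtain \<sigma> where s: "bij_betw \<sigma> ?V1 ?V2"
    and rr: "rule_rename (\<lambda>x. if x \<in> ?V1 then \<sigma> x else x) (to_rule (rcode g1)) = to_rule (rcode g2)"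
    using bv unfolding is_body_variant_def bov_rcode by blast
  let ?r = "\<lambda>x. if x \<in> ?V1 then \<sigma> x else x"
  have "head (rule_rename ?r (to_rule (rcode g1))) = head (to_rule (rcode g2))" using rr by simp
  then have n: "fst g1 = fst g2" by (simp add: rule_rename_def head_rcode lit_rename_lit)
  have body: "lit_rename ?r ` body (to_rule (rcode g1)) = body (to_rule (rcode g2))"
    using arg_cong[OF rr, of body] by (simp add: rule_rename_def)
  define n where "n = fst g1"
  have V1: "?V1 \<subseteq> {..<n}" using edge_valid[OF v1] by (auto simp: n_def)
  have V2: "?V2 \<subseteq> {..<n}" using edge_valid[OF v2] by (auto simp: n_def n)
  have fin1: "finite ?V1" using V1 finite_subset by blast
  have fin2: "finite ?V2" using V2 finite_subset by blast
  have cV: "card ?V1 = card ?V2" using bij_betw_same_card[OF s] .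
  have "card ({..<n} - ?V1) = card ({..<n} - ?V2)"
    using cV V1 V2 fin1 fin2 by (simp add: card_Diff_subset)
  then obtain h where h: "bij_betw h ({..<n} - ?V1) ({..<n} - ?V2)"
    using finite_same_card_bij by blast
  define f where "f = (\<lambda>x. if x \<in> ?V1 then \<sigma> x else h x)"
  have "bij_betw f (?V1 \<union> ({..<n} - ?V1)) (?V2 \<union> ({..<n} - ?V2))"
    unfolding f_def by (rule bij_betw_disjoint_Un[OF s h]) auto
  moreover have "?V1 \<union> ({..<n} - ?V1) = {..<n}" "?V2 \<union> ({..<n} - ?V2) = {..<n}" using V1 V2 by auto
  ultimately have fb: "bij_betw f {..<n} {..<n}" by simp
  have injs: "inj_on \<sigma> ?V1" using s by (simp add: bij_betw_def)
  have sV: "\<And>x. x \<in> ?V1 \<Longrightarrow> \<sigma> x \<in> ?V2" using s by (rule bij_betw_apply)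
  have hV: "\<And>x. x < n \<Longrightarrow> x \<notin> ?V1 \<Longrightarrow> h x \<notin> ?V2" using bij_betw_apply[OF h] by blast
  have e: "\<forall>u<n. \<forall>v<n. {u, v} \<in> edges g1 \<longleftrightarrow> {f u, f v} \<in> edges g2"
  proof (intro allI impI iffI)
    fix u v assume uv: "u < n" "v < n" and E: "{u,v} \<in> edges g1"
    then have inV: "u \<in> ?V1" "v \<in> ?V1" by (auto simp: insert_commute)
    have "Lit 0 [u,v] \<in> body (to_rule (rcode g1))" using E by (auto simp: body_rcode)
    then have "lit_rename ?r (Lit 0 [u,v]) \<in> body (to_rule (rcode g2))" using body by blast
    then show "{f u, f v} \<in> edges g2" using inV by (auto simp: lit_rename_lit body_rcode f_def)
  next
    fix u v assume uv: "u < n" "v < n" and E: "{f u, f v} \<in> edges g2"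
    have fV1: "f u \<in> ?V2" using E by blast
    have "{f v, f u} \<in> edges g2" using E by (simp add: insert_commute)
    then have fV2: "f v \<in> ?V2" by blast
    note fV = fV1 fV2
    have inV1: "u \<in> ?V1"
    proof (rule ccontr)
      assume a: "u \<notin> ?V1"
      then have "f u = h u" by (simp add: f_def)
      then show False using hV[OF uv(1) a] fV1 by simp
    qed
    have inV2: "v \<in> ?V1"
    proof (rule ccontr)
      assume a: "v \<notin> ?V1"
      then have "f v = h v" by (simp add: f_def)
      then show False using hV[OF uv(2) a] fV2 by simp
    qed
    note inV = inV1 inV2
    then have "Lit 0 [\<sigma> u, \<sigma> v] \<in> body (to_rule (rcode g2))" using E by (auto simp: body_rcode f_def)
    then obtain l where l: "l \<in> body (to_rule (rcode g1))" "lit_rename ?r l = Lit 0 [\<sigma> u, \<sigma> v]"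
      using body by (metis (no_types, lifting) imageE)
    then obtain a b where ab: "l = Lit 0 [a,b]" "{a,b} \<in> edges g1" by (auto simp: body_rcode)
    then have abV: "a \<in> ?V1" "b \<in> ?V1" by (auto simp: insert_commute)
    have sa: "\<sigma> a = \<sigma> u" "\<sigma> b = \<sigma> v" using l(2) ab abV by (auto simp: lit_rename_lit)
    have "a = u" using inj_onD[OF injs sa(1) abV(1) inV(1)] .
    moreover have "b = v" using inj_onD[OF injs sa(2) abV(2) inV(2)] .
    ultimately show "{u,v} \<in> edges g1" using ab by simp
  qed
  show ?thesis unfolding graph_iso_def using fb e n by (auto simp: n_def)
qed


lemma hv_single: "is_hyp_variant {x} {y} \<longleftrightarrow> is_body_variant x y"
proof
  assume "is_hyp_variant {x} {y}"
  then obtain f where "bij_betw f {x} {y}" "is_body_variant x (f x)" unfolding is_hyp_variant_def by blast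
  then show "is_body_variant x y" by (simp add: bij_betw_def)
next
  assume "is_body_variant x y"
  then show "is_hyp_variant {x} {y}" unfolding is_hyp_variant_def
    by (intro exI[of _ "\<lambda>_. y"]) (simp add: bij_betw_def)
qed

lemma iso_iff:
  assumes "valid_graph g1" "valid_graph g2"
  shows "graph_iso g1 g2 \<longleftrightarrow> hyp_variants (to_hyp [rcode g1]) (to_hyp [rcode g2])"
proof -
  have A: "\<And>g. to_hyp [rcode g] = {to_rule (rcode g)}" by (simp add: to_hyp_def)
  have B: "hyp_variants (to_hyp [rcode g1]) (to_hyp [rcode g2]) \<longleftrightarrow>
     is_body_variant (to_rule (rcode g1)) (to_rule (rcode g2)) \<and> is_body_variant (to_rule (rcode g2)) (to_rule (rcode g1))"
    unfolding hyp_variants_def A hv_single by (rule refl)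
  show ?thesis unfolding B using iso_bv[OF assms] iso_bv[OF assms(2,1)] bv_iso[OF assms] iso_sym by blast
qed

theorem mainTheorem2:
  shows "\<exists>M c k. wf_tm M \<and>
    (\<forall>g1 g2. valid_graph g1 \<and> valid_graph g2 \<longrightarrow>
      (let w = enc (L [graph_obj g1, graph_obj g2]) in
       \<exists>rs1 rs2.
         computes_within M (c * (length w + 1) ^ k) w (enc (L [hyp_obj rs1, hyp_obj rs2])) \<and>
         (graph_iso g1 g2 \<longleftrightarrow> hyp_variants (to_hyp rs1) (to_hyp rs2))))"
proof (rule exI[of _ TM], rule exI[of _ 50], rule exI[of _ 2], intro conjI allI impI)
  show "wf_tm TM" by (rule wf_TM)
  fix g1 g2 assume v: "valid_graph g1 \<and> valid_graph g2"
  have w: "enc (L [graph_obj g1, graph_obj g2]) = 3 # enc (graph_obj g1) @ enc (graph_obj g2) @ [4]" by simp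
  have o: "enc (L [hyp_obj [rcode g1], hyp_obj [rcode g2]]) = 3 # enc (hyp_obj [rcode g1]) @ enc (hyp_obj [rcode g2]) @ [4]" by simp
  have "computes_within TM (50 * (length (enc (L [graph_obj g1, graph_obj g2])) + 1) ^ 2) (enc (L [graph_obj g1, graph_obj g2]))
          (enc (L [hyp_obj [rcode g1], hyp_obj [rcode g2]]))"
    unfolding w o enc_graph enc_hyp by (rule top_run)
  then show "let w = enc (L [graph_obj g1, graph_obj g2]) in
       \<exists>rs1 rs2.
         computes_within TM (50 * (length w + 1) ^ 2) w (enc (L [hyp_obj rs1, hyp_obj rs2])) \<and>
         (graph_iso g1 g2 \<longleftrightarrow> hyp_variants (to_hyp rs1) (to_hyp rs2))"
    using iso_iff v unfolding Let_def by blast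
qed


end
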